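(* Let $\{1,\mu_1,\mu_2,\mu_3\}$ be a quaternion basis ($\mu_1,\mu_2$ orthogonal pure unit quaternions, $\mu_3=\mu_1\mu_2$), and let $q=z_1+z_2\mu_2$ with $z_1,z_2$ random variables in $\mathbb{C}_{\mu_1}$ be a centered quaternion Gaussian random variable which is $(\mu_1,1)$-proper, i.e. $q\stackrel{d}{=}\mu_1 q$. Let ${\bf q}_{\mathbb{C}}=[z_1,z_1^{\star},z_2,z_2^{\star}]^T$. Then $$\mathbb{E}[{\bf q}_{\mathbb{C}}{\bf q}_{\mathbb{C}}^{\dagger}]=\begin{bmatrix}\sigma^2 & 0 & \omega & 0\\ 0 & \sigma^2 & 0 & \omega^{\star}\\ \omega^{\star} & 0 & \varsigma^2 & 0\\ 0 & \omega & 0 & \varsigma^2\end{bmatrix},$$ where $\sigma^2=\mathbb{E}[|z_1|^2]\in\mathbb{R}$, $\varsigma^2=\mathbb{E}[|z_2|^2]\in\mathbb{R}$ and $\omega=\mathbb{E}[z_1z_2^{\star}]\in\mathbb{C}_{\mu_1}$.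
   Context: $\mathbb{H}$ denotes the quaternions; $\mathbb{C}_{\mu_1}=\mathbb{R}\oplus\mu_1\mathbb{R}$ is the commutative subfield isomorphic to $\mathbb{C}$; $^{\star}$ denotes conjugation and $\dagger$ conjugate transpose. A quaternion Gaussian random variable is one whose four real components are jointly Gaussian; centered means $\mathbb{E}[q]=0$. $\stackrel{d}{=}$ denotes equality in distribution. *)

theory Defs
  imports "HOL-Probability.Probability"
begin

datatype quat = Quat (qre: real) (qi: real) (qj: real) (qk: real)

definition qadd :: "quat \<Rightarrow> quat \<Rightarrow> quat" where
  "qadd p q = Quat (qre p + qre q) (qi p + qi q) (qj p + qj q) (qk p + qk q)"

definition qscale :: "real \<Rightarrow> quat \<Rightarrow> quat" where
  "qscale r q = Quat (r * qre q) (r * qi q) (r * qj q) (r * qk q)"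

definition qmult :: "quat \<Rightarrow> quat \<Rightarrow> quat" where
  "qmult p q = Quat
     (qre p * qre q - qi p * qi q - qj p * qj q - qk p * qk q)
     (qre p * qi q + qi p * qre q + qj p * qk q - qk p * qj q)
     (qre p * qj q - qi p * qk q + qj p * qre q + qk p * qi q)
     (qre p * qk q + qi p * qj q - qj p * qi q + qk p * qre q)"

definition qone :: quat where "qone = Quat 1 0 0 0"

definition pure_unit :: "quat \<Rightarrow> bool" where
  "pure_unit q \<longleftrightarrow> qre q = 0 \<and> (qi q)\<^sup>2 + (qj q)\<^sup>2 + (qk q)\<^sup>2 = 1"

definition q_orth :: "quat \<Rightarrow> quat \<Rightarrow> bool" where
  "q_orth p q \<longleftrightarrow> qre p * qre q + qi p * qi q + qj p * qj q + qk p * qk q = 0"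

text \<open>Embedding of the commutative subfield C_mu1 = R + mu1 R (isomorphic to C):
  the complex number a + i b corresponds to the quaternion a + b mu1.\<close>
definition cemb :: "quat \<Rightarrow> complex \<Rightarrow> quat" where
  "cemb \<mu>1 z = qadd (qscale (Re z) qone) (qscale (Im z) \<mu>1)"

definition qvec :: "quat \<Rightarrow> real \<times> real \<times> real \<times> real" where
  "qvec q = (qre q, qi q, qj q, qk q)"

definition real_gaussian :: "'a measure \<Rightarrow> ('a \<Rightarrow> real) \<Rightarrow> bool" where
  "real_gaussian M X \<longleftrightarrow> X \<in> borel_measurable M \<and>
     ((\<exists>m. AE x in M. X x = m) \<or>
      (\<exists>m s. s > 0 \<and> distributed M lborel X (normal_density m s)))"

text \<open>Quaternion Gaussian: the four real components are jointly Gaussian, i.e. every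
  real linear combination of them is Gaussian.\<close>
definition quat_gaussian :: "'a measure \<Rightarrow> ('a \<Rightarrow> quat) \<Rightarrow> bool" where
  "quat_gaussian M q \<longleftrightarrow> (\<lambda>x. qvec (q x)) \<in> borel_measurable M \<and>
     (\<forall>a b c d. real_gaussian M (\<lambda>x. a * qre (q x) + b * qi (q x) + c * qj (q x) + d * qk (q x)))"

definition quat_centered :: "'a measure \<Rightarrow> ('a \<Rightarrow> quat) \<Rightarrow> bool" where
  "quat_centered M q \<longleftrightarrow>
     (\<integral>x. qre (q x) \<partial>M) = 0 \<and> (\<integral>x. qi (q x) \<partial>M) = 0 \<and>
     (\<integral>x. qj (q x) \<partial>M) = 0 \<and> (\<integral>x. qk (q x) \<partial>M) = 0"

definition proper_mu1 :: "'a measure \<Rightarrow> quat \<Rightarrow> ('a \<Rightarrow> quat) \<Rightarrow> bool" where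
  "proper_mu1 M \<mu>1 q \<longleftrightarrow>
     distr M borel (\<lambda>x. qvec (q x)) = distr M borel (\<lambda>x. qvec (qmult \<mu>1 (q x)))"

end

theory Submission
  imports Defs
begin

definition qinner :: "quat \<Rightarrow> quat \<Rightarrow> real" where
  "qinner p m = qre p * qre m + qi p * qi m + qj p * qj m + qk p * qk m"

definition D1 :: "quat \<Rightarrow> quat \<Rightarrow> complex" where
  "D1 m1 p = complex_of_real (qre p) + \<i> * complex_of_real (qinner p m1)"
definition D2 :: "quat \<Rightarrow> quat \<Rightarrow> quat \<Rightarrow> complex" where
  "D2 m1 m2 p = complex_of_real (qinner p m2) + \<i> * complex_of_real (qinner p (qmult m1 m2))"

lemma dec1:
  assumes "pure_unit m1" "pure_unit m2" "q_orth m1 m2"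
  shows "D1 m1 (qadd (cemb m1 a) (qmult (cemb m1 b) m2)) = a"
proof -
  obtain r1 a1 a2 a3 where m1: "m1 = Quat r1 a1 a2 a3" by (cases m1)
  obtain r2 b1 b2 b3 where m2: "m2 = Quat r2 b1 b2 b3" by (cases m2)
  from assms have h: "r1 = 0" "r2 = 0" "a1^2+a2^2+a3^2 = 1" "b1^2+b2^2+b3^2=1" "a1*b1+a2*b2+a3*b3 = 0"
    by (auto simp: pure_unit_def q_orth_def m1 m2)
  show ?thesis
    apply (simp add: D1_def qinner_def qadd_def qmult_def cemb_def qscale_def qone_def m1 m2 h(1,2) complex_eq_iff)
    using h(3-5) by algebra
qed

lemma dec2:
  assumes "pure_unit m1" "pure_unit m2" "q_orth m1 m2"
  shows "D2 m1 m2 (qadd (cemb m1 a) (qmult (cemb m1 b) m2)) = b"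
proof -
  obtain r1 a1 a2 a3 where m1: "m1 = Quat r1 a1 a2 a3" by (cases m1)
  obtain r2 b1 b2 b3 where m2: "m2 = Quat r2 b1 b2 b3" by (cases m2)
  from assms have h: "r1 = 0" "r2 = 0" "a1^2+a2^2+a3^2 = 1" "b1^2+b2^2+b3^2=1" "a1*b1+a2*b2+a3*b3 = 0"
    by (auto simp: pure_unit_def q_orth_def m1 m2)
  show ?thesis
    apply (simp add: D2_def qinner_def qadd_def qmult_def cemb_def qscale_def qone_def m1 m2 h(1,2) complex_eq_iff)
    using h(3-5) by algebra
qed

lemma mulmu:
  assumes "pure_unit m1"
  shows "qmult m1 (qadd (cemb m1 a) (qmult (cemb m1 b) m2)) = qadd (cemb m1 (\<i>*a)) (qmult (cemb m1 (\<i>*b)) m2)"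
proof -
  obtain r1 a1 a2 a3 where m1: "m1 = Quat r1 a1 a2 a3" by (cases m1)
  obtain r2 b1 b2 b3 where m2: "m2 = Quat r2 b1 b2 b3" by (cases m2)
  from assms have h: "r1 = 0" "a1^2+a2^2+a3^2 = 1"
    by (auto simp: pure_unit_def m1)
  show ?thesis
    apply (simp add: qadd_def qmult_def cemb_def qscale_def qone_def m1 m2 h(1))
    using h(2) by (intro conjI; algebra)
qed

definition vq :: "real\<times>real\<times>real\<times>real \<Rightarrow> quat" where
  "vq v = Quat (fst v) (fst (snd v)) (fst (snd (snd v))) (snd (snd (snd v)))"

lemma vq_qvec[simp]: "vq (qvec p) = p"
  by (cases p) (simp add: vq_def qvec_def)

lemma cont_L: "continuous_on UNIV (\<lambda>v. qvec (qmult m (vq v)))"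
  unfolding qvec_def qmult_def vq_def by (simp, intro continuous_intros)

lemma cont_D1: "continuous_on UNIV (\<lambda>v. D1 m (vq v))"
  unfolding D1_def qinner_def vq_def by (simp, intro continuous_intros)

lemma cont_D2: "continuous_on UNIV (\<lambda>v. D2 m1 m2 (vq v))"
  unfolding D2_def qinner_def vq_def by (simp, intro continuous_intros)

lemma swap:
  assumes qm: "(\<lambda>x. qvec (q x)) \<in> borel_measurable M" and pr: "proper_mu1 M m q"
    and gc: "continuous_on UNIV (g :: _ \<Rightarrow> complex)"
  shows "(\<integral>x. g (qvec (q x)) \<partial>M) = (\<integral>x. g (qvec (qmult m (q x))) \<partial>M)"
proof -
  have gm: "g \<in> borel_measurable borel" using gc by (rule borel_measurable_continuous_onI)
  have Lm: "(\<lambda>v. qvec (qmult m (vq v))) \<in> borel_measurable borel"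
    using cont_L by (rule borel_measurable_continuous_onI)
  have m2: "(\<lambda>x. qvec (qmult m (q x))) \<in> borel_measurable M"
    using measurable_comp[OF qm Lm] by (simp add: o_def)
  have "(\<integral>x. g (qvec (q x)) \<partial>M) = integral\<^sup>L (distr M borel (\<lambda>x. qvec (q x))) g"
    by (rule integral_distr[OF qm gm, symmetric])
  also have "\<dots> = integral\<^sup>L (distr M borel (\<lambda>x. qvec (qmult m (q x)))) g"
    using pr by (simp add: proper_mu1_def)
  also have "\<dots> = (\<integral>x. g (qvec (qmult m (q x))) \<partial>M)"
    by (rule integral_distr[OF m2 gm])
  finally show ?thesis .
qed

lemma zero_prod:
  assumes qm: "(\<lambda>x. qvec (q x)) \<in> borel_measurable M" and pr: "proper_mu1 M m q"
    and cF: "continuous_on UNIV (\<lambda>v. F (vq v))" and cG: "continuous_on UNIV (\<lambda>v. G (vq v))"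
    and e: "\<And>x. x \<in> space M \<Longrightarrow> F (q x) = f x \<and> G (q x) = g x \<and>
               F (qmult m (q x)) = \<i> * f x \<and> G (qmult m (q x)) = \<i> * g x"
  shows "(\<integral>x. f x * g x \<partial>M) = (0::complex)"
proof -
  have c: "continuous_on UNIV (\<lambda>v. F (vq v) * G (vq v))" using cF cG by (intro continuous_intros)
  have "(\<integral>x. f x * g x \<partial>M) = (\<integral>x. (\<lambda>v. F (vq v) * G (vq v)) (qvec (q x)) \<partial>M)"
    by (rule Bochner_Integration.integral_cong[OF refl]) (simp add: e)
  also have "\<dots> = (\<integral>x. (\<lambda>v. F (vq v) * G (vq v)) (qvec (qmult m (q x))) \<partial>M)"
    by (rule swap[OF qm pr c])
  also have "\<dots> = (\<integral>x. - (f x * g x) \<partial>M)"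
    by (rule Bochner_Integration.integral_cong[OF refl]) (simp add: e algebra_simps)
  also have "\<dots> = - (\<integral>x. f x * g x \<partial>M)" by simp
  finally show ?thesis by simp
qed


theorem mainTheorem4:
  fixes M :: "'a measure" and \<mu>1 \<mu>2 \<mu>3 :: quat
    and q :: "'a \<Rightarrow> quat" and z1 z2 :: "'a \<Rightarrow> complex"
  assumes "prob_space M"
    and "pure_unit \<mu>1" and "pure_unit \<mu>2" and "q_orth \<mu>1 \<mu>2" and "\<mu>3 = qmult \<mu>1 \<mu>2"
    and "\<And>x. x \<in> space M \<Longrightarrow> q x = qadd (cemb \<mu>1 (z1 x)) (qmult (cemb \<mu>1 (z2 x)) \<mu>2)"
    and "quat_gaussian M q" and "quat_centered M q"
    and "proper_mu1 M \<mu>1 q"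
  shows "let qC = (\<lambda>x. [z1 x, cnj (z1 x), z2 x, cnj (z2 x)]);
             \<sigma>2 = complex_of_real (\<integral>x. (cmod (z1 x))\<^sup>2 \<partial>M);
             \<zeta>2 = complex_of_real (\<integral>x. (cmod (z2 x))\<^sup>2 \<partial>M);
             \<omega> = (\<integral>x. z1 x * cnj (z2 x) \<partial>M);
             R = [[\<sigma>2, 0, \<omega>, 0],
                  [0, \<sigma>2, 0, cnj \<omega>],
                  [cnj \<omega>, 0, \<zeta>2, 0],
                  [0, \<omega>, 0, \<zeta>2]]
         in \<forall>i<4. \<forall>j<4. (\<integral>x. qC x ! i * cnj (qC x ! j) \<partial>M) = R ! i ! j"
  proof -
  have qm: "(\<lambda>x. qvec (q x)) \<in> borel_measurable M" using assms(7) by (simp add: quat_gaussian_def)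
  have e: "\<And>x. x \<in> space M \<Longrightarrow> D1 \<mu>1 (q x) = z1 x \<and> D2 \<mu>1 \<mu>2 (q x) = z2 x \<and>
      D1 \<mu>1 (qmult \<mu>1 (q x)) = \<i> * z1 x \<and> D2 \<mu>1 \<mu>2 (qmult \<mu>1 (q x)) = \<i> * z2 x"
    using assms(6) dec1[OF assms(2-4)] dec2[OF assms(2-4)] mulmu[OF assms(2)] by simp
  have z11: "(\<integral>x. z1 x * z1 x \<partial>M) = 0"
    by (rule zero_prod[OF qm assms(9) cont_D1[of \<mu>1] cont_D1[of \<mu>1]]) (simp add: e)
  have z12: "(\<integral>x. z1 x * z2 x \<partial>M) = 0"
    by (rule zero_prod[OF qm assms(9) cont_D1[of \<mu>1] cont_D2[of \<mu>1 \<mu>2]]) (simp add: e)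
  have z21: "(\<integral>x. z2 x * z1 x \<partial>M) = 0"
    by (rule zero_prod[OF qm assms(9) cont_D2[of \<mu>1 \<mu>2] cont_D1[of \<mu>1]]) (simp add: e)
  have z22: "(\<integral>x. z2 x * z2 x \<partial>M) = 0"
    by (rule zero_prod[OF qm assms(9) cont_D2[of \<mu>1 \<mu>2] cont_D2[of \<mu>1 \<mu>2]]) (simp add: e)
  have c11: "(\<integral>x. cnj (z1 x) * cnj (z1 x) \<partial>M) = 0"
    using z11 by (simp flip: complex_cnj_mult)
  have c12: "(\<integral>x. cnj (z1 x) * cnj (z2 x) \<partial>M) = 0"
    using z12 by (simp flip: complex_cnj_mult)
  have c21: "(\<integral>x. cnj (z2 x) * cnj (z1 x) \<partial>M) = 0"
    using z21 by (simp flip: complex_cnj_mult)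
  have c22: "(\<integral>x. cnj (z2 x) * cnj (z2 x) \<partial>M) = 0"
    using z22 by (simp flip: complex_cnj_mult)
  have n1: "(\<integral>x. z1 x * cnj (z1 x) \<partial>M) = complex_of_real (\<integral>x. (cmod (z1 x))\<^sup>2 \<partial>M)"
    by (subst integral_complex_of_real[symmetric]) (simp only: complex_norm_square)
  have n1': "(\<integral>x. cnj (z1 x) * z1 x \<partial>M) = complex_of_real (\<integral>x. (cmod (z1 x))\<^sup>2 \<partial>M)"
    by (subst integral_complex_of_real[symmetric]) (simp only: complex_norm_square mult.commute)
  have n2: "(\<integral>x. z2 x * cnj (z2 x) \<partial>M) = complex_of_real (\<integral>x. (cmod (z2 x))\<^sup>2 \<partial>M)"
    by (subst integral_complex_of_real[symmetric]) (simp only: complex_norm_square)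
  have n2': "(\<integral>x. cnj (z2 x) * z2 x \<partial>M) = complex_of_real (\<integral>x. (cmod (z2 x))\<^sup>2 \<partial>M)"
    by (subst integral_complex_of_real[symmetric]) (simp only: complex_norm_square mult.commute)
  have w1: "(\<integral>x. cnj (z1 x) * z2 x \<partial>M) = cnj (\<integral>x. z1 x * cnj (z2 x) \<partial>M)"
    by (subst Bochner_Integration.integral_cnj[symmetric]) simp
  have w2: "(\<integral>x. z2 x * cnj (z1 x) \<partial>M) = cnj (\<integral>x. z1 x * cnj (z2 x) \<partial>M)"
    by (subst Bochner_Integration.integral_cnj[symmetric]) (simp add: mult.commute)
  have w3: "(\<integral>x. cnj (z2 x) * z1 x \<partial>M) = (\<integral>x. z1 x * cnj (z2 x) \<partial>M)"
    by (simp add: mult.commute)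
  show ?thesis
    unfolding Let_def
    by (simp add: less_Suc_eq numeral_eq_Suc z11 z12 z21 z22 c11 c12 c21 c22 n1 n1' n2 n2' w1 w2 w3
                  del: integral_cnj)
qed

end
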